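(* Let $f\in\mathcal H$, $f\neq 0$, and let $d=\operatorname{ord}_0(f)$. Then $f$ is $\mathcal H$-inner if and only if $f=c\,\Pi_{[f]}\big(k_0^{(d)}\big)$ for some nonzero constant $c\in\mathbb C$. Moreover, $\Pi_{[f]}\big(k_0^{(d)}\big)$ is always an $\mathcal H$-inner function.
   Context: Standing assumptions: $\Omega\subset\mathbb C$ is a domain with $0\in\Omega$, and $\mathcal H$ is a Hilbert space of analytic functions on $\Omega$ in which every point evaluation $f\mapsto f(w)$, $w\in\Omega$, is bounded (a reproducing kernel Hilbert space); the shift $S$, $(Sf)(z)=zf(z)$, is a bounded operator on $\mathcal H$; and the analytic polynomials $\mathcal P$ are dense in $\mathcal H$. For $w\in\Omega$ and $m\ge 0$, $k_w^{(m)}$ denotes the unique element of $\mathcal H$ with $\langle f,k_w^{(m)}\rangle=f^{(m)}(w)$ for all $f\in\mathcal H$, and $k_w=k_w^{(0)}$. For $f\in\mathcal H$, $[f]$ denotes the closure in $\mathcal H$ of $\operatorname{span}\{z^kf:k\ge0\}$. For a closed subspace $V$, $\Pi_V$ is the orthogonal projection onto $V$. $\operatorname{ord}_0(f)$ is the order of the zero of $f$ at $0$. A function $f\in\mathcal H\setminus\{0\}$ is called $\mathcal H$-inner if $\langle f,z^kf\rangle=0$ for all integers $k\ge1$ (no normalization required). *)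

theory Defs
  imports "HOL-Analysis.Analysis" "HOL-Computational_Algebra.Polynomial" "HOL-Library.Function_Algebras"
begin

type_synonym cfun = "complex \<Rightarrow> complex"

text \<open>Elements of the Hilbert space are analytic functions on the domain,
  represented canonically by extending them by 0 outside the domain.\<close>

definition hnorm :: "(cfun \<Rightarrow> cfun \<Rightarrow> complex) \<Rightarrow> cfun \<Rightarrow> real" where
  "hnorm ip f = sqrt (Re (ip f f))"

definition smul :: "complex \<Rightarrow> cfun \<Rightarrow> cfun" where
  "smul c f = (\<lambda>z. c * f z)"

definition shift :: "cfun \<Rightarrow> cfun" where
  "shift f = (\<lambda>z. z * f z)"

definition polyOn :: "complex set \<Rightarrow> complex poly \<Rightarrow> cfun" where
  "polyOn \<Omega> p = (\<lambda>z. if z \<in> \<Omega> then poly p z else 0)"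

definition rkhs_setting ::
  "complex set \<Rightarrow> cfun set \<Rightarrow> (cfun \<Rightarrow> cfun \<Rightarrow> complex) \<Rightarrow> bool" where
  "rkhs_setting \<Omega> H ip \<longleftrightarrow>
     \<comment> \<open>domain containing 0\<close>
     open \<Omega> \<and> connected \<Omega> \<and> 0 \<in> \<Omega> \<and>
     \<comment> \<open>space of analytic functions on the domain\<close>
     (\<forall>f\<in>H. f holomorphic_on \<Omega> \<and> (\<forall>z. z \<notin> \<Omega> \<longrightarrow> f z = 0)) \<and>
     \<comment> \<open>complex vector space\<close>
     (0::cfun) \<in> H \<and> (\<forall>f\<in>H. \<forall>g\<in>H. f + g \<in> H) \<and> (\<forall>c. \<forall>f\<in>H. smul c f \<in> H) \<and>
     \<comment> \<open>inner product\<close>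
     (\<forall>f\<in>H. \<forall>g\<in>H. \<forall>h\<in>H. ip (f + g) h = ip f h + ip g h) \<and>
     (\<forall>c. \<forall>f\<in>H. \<forall>g\<in>H. ip (smul c f) g = c * ip f g) \<and>
     (\<forall>f\<in>H. \<forall>g\<in>H. ip g f = cnj (ip f g)) \<and>
     (\<forall>f\<in>H. Re (ip f f) \<ge> 0) \<and>
     (\<forall>f\<in>H. ip f f = 0 \<longrightarrow> f = 0) \<and>
     \<comment> \<open>completeness\<close>
     (\<forall>X. (\<forall>n. X n \<in> H) \<and> (\<forall>e>0. \<exists>N. \<forall>m\<ge>N. \<forall>n\<ge>N. hnorm ip (X m - X n) < e)
          \<longrightarrow> (\<exists>g\<in>H. (\<lambda>n. hnorm ip (X n - g)) \<longlonglongrightarrow> 0)) \<and>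
     \<comment> \<open>bounded point evaluations\<close>
     (\<forall>w\<in>\<Omega>. \<exists>C. \<forall>f\<in>H. norm (f w) \<le> C * hnorm ip f) \<and>
     \<comment> \<open>bounded shift\<close>
     (\<forall>f\<in>H. shift f \<in> H) \<and> (\<exists>C. \<forall>f\<in>H. hnorm ip (shift f) \<le> C * hnorm ip f) \<and>
     \<comment> \<open>polynomials belong to H and are dense\<close>
     (\<forall>p. polyOn \<Omega> p \<in> H) \<and>
     (\<forall>f\<in>H. \<forall>e>0. \<exists>p. hnorm ip (f - polyOn \<Omega> p) < e)"

definition rkernel :: "cfun set \<Rightarrow> (cfun \<Rightarrow> cfun \<Rightarrow> complex) \<Rightarrow> nat \<Rightarrow> complex \<Rightarrow> cfun" where
  "rkernel H ip m w = (THE k. k \<in> H \<and> (\<forall>f\<in>H. ip f k = (deriv ^^ m) f w))"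

text \<open>[f]: closure in H of span of z^k f (k \<ge> 0), i.e. of the polynomial multiples of f.\<close>
definition cyclic :: "cfun set \<Rightarrow> (cfun \<Rightarrow> cfun \<Rightarrow> complex) \<Rightarrow> cfun \<Rightarrow> cfun set" where
  "cyclic H ip f = {g \<in> H. \<forall>e>0. \<exists>p. hnorm ip (g - (\<lambda>z. poly p z * f z)) < e}"

definition proj :: "(cfun \<Rightarrow> cfun \<Rightarrow> complex) \<Rightarrow> cfun set \<Rightarrow> cfun \<Rightarrow> cfun" where
  "proj ip V x = (THE y. y \<in> V \<and> (\<forall>v\<in>V. ip (x - y) v = 0))"

definition ord0 :: "cfun \<Rightarrow> nat" where
  "ord0 f = (LEAST n. (deriv ^^ n) f 0 \<noteq> 0)"

definition H_inner :: "cfun set \<Rightarrow> (cfun \<Rightarrow> cfun \<Rightarrow> complex) \<Rightarrow> cfun \<Rightarrow> bool" where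
  "H_inner H ip f \<longleftrightarrow> f \<in> H \<and> f \<noteq> 0 \<and> (\<forall>k::nat. k \<ge> 1 \<longrightarrow> ip f (\<lambda>z. z ^ k * f z) = 0)"

end

theory Submission
  imports Defs "HOL-Complex_Analysis.Complex_Analysis"
begin

locale rk =
  fixes Om :: "complex set" and H :: "cfun set" and ip :: "cfun \<Rightarrow> cfun \<Rightarrow> complex"
  assumes S: "rkhs_setting Om H ip"
begin

abbreviation nm where "nm f \<equiv> hnorm ip f"

lemmas SS = S[unfolded rkhs_setting_def]
lemma Om_open: "open Om" using SS by (elim conjE) assumption
lemma Om_conn: "connected Om" using SS by (elim conjE) assumption
lemma Om_0: "0 \<in> Om" using SS by (elim conjE) assumption
lemma H_holo': "\<forall>f\<in>H. f holomorphic_on Om \<and> (\<forall>z. z \<notin> Om \<longrightarrow> f z = 0)" using SS by (elim conjE) assumption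
lemma H_holo: "f \<in> H \<Longrightarrow> f holomorphic_on Om" using H_holo' by blast
lemma H_out: "f \<in> H \<Longrightarrow> z \<notin> Om \<Longrightarrow> f z = 0" using H_holo' by blast
lemma H_zero[simp]: "(0::cfun) \<in> H" using SS by (elim conjE) assumption
lemma H_add': "\<forall>f\<in>H. \<forall>g\<in>H. f + g \<in> H" using SS by (elim conjE) assumption
lemma H_add[simp]: "f \<in> H \<Longrightarrow> g \<in> H \<Longrightarrow> f + g \<in> H" using H_add' by blast
lemma H_smul': "\<forall>c. \<forall>f\<in>H. smul c f \<in> H" using SS by (elim conjE) assumption
lemma H_smul[simp]: "f \<in> H \<Longrightarrow> smul c f \<in> H" using H_smul' by blast
lemma ip_add': "\<forall>f\<in>H. \<forall>g\<in>H. \<forall>h\<in>H. ip (f + g) h = ip f h + ip g h" using SS by (elim conjE) assumption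
lemma ip_add: "f \<in> H \<Longrightarrow> g \<in> H \<Longrightarrow> h \<in> H \<Longrightarrow> ip (f + g) h = ip f h + ip g h"
  using ip_add' by blast
lemma ip_smul': "\<forall>c. \<forall>f\<in>H. \<forall>g\<in>H. ip (smul c f) g = c * ip f g" using SS by (elim conjE) assumption
lemma ip_smul: "f \<in> H \<Longrightarrow> g \<in> H \<Longrightarrow> ip (smul c f) g = c * ip f g" using ip_smul' by blast
lemma ip_sym': "\<forall>f\<in>H. \<forall>g\<in>H. ip g f = cnj (ip f g)" using SS by (elim conjE) assumption
lemma ip_sym: "f \<in> H \<Longrightarrow> g \<in> H \<Longrightarrow> ip g f = cnj (ip f g)" using ip_sym' by blast
lemma ip_pos': "\<forall>f\<in>H. Re (ip f f) \<ge> 0" using SS by (elim conjE) assumption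
lemma ip_pos: "f \<in> H \<Longrightarrow> Re (ip f f) \<ge> 0" using ip_pos' by blast
lemma ip_def0': "\<forall>f\<in>H. ip f f = 0 \<longrightarrow> f = 0" using SS by (elim conjE) assumption
lemma ip_def0: "f \<in> H \<Longrightarrow> ip f f = 0 \<Longrightarrow> f = 0" using ip_def0' by blast
lemma H_complete': "\<forall>X. (\<forall>n. X n \<in> H) \<and> (\<forall>e>0. \<exists>N. \<forall>m\<ge>N. \<forall>n\<ge>N. nm (X m - X n) < e)
          \<longrightarrow> (\<exists>g\<in>H. (\<lambda>n. nm (X n - g)) \<longlonglongrightarrow> 0)" using SS by (elim conjE) assumption
lemma H_complete: "(\<And>n. X n \<in> H) \<Longrightarrow> (\<And>e. e>0 \<Longrightarrow> \<exists>N. \<forall>m\<ge>N. \<forall>n\<ge>N. nm (X m - X n) < e)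
          \<Longrightarrow> (\<exists>g\<in>H. (\<lambda>n. nm (X n - g)) \<longlonglongrightarrow> 0)"
  using H_complete'[rule_format, of X] by blast
lemma H_eval': "\<forall>w\<in>Om. \<exists>C. \<forall>f\<in>H. norm (f w) \<le> C * nm f" using SS by (elim conjE) assumption
lemma H_eval: "w \<in> Om \<Longrightarrow> \<exists>C. \<forall>f\<in>H. norm (f w) \<le> C * nm f" using H_eval' by blast
lemma H_shift': "\<forall>f\<in>H. shift f \<in> H" using SS by (elim conjE) assumption
lemma H_shift[simp]: "f \<in> H \<Longrightarrow> shift f \<in> H" using H_shift' by blast
lemma H_shift_bd: "\<exists>C. \<forall>f\<in>H. nm (shift f) \<le> C * nm f" using SS by (elim conjE) assumption
lemma H_poly': "\<forall>p. polyOn Om p \<in> H" using SS by (elim conjE) assumption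
lemma H_poly: "polyOn Om p \<in> H" using H_poly' by blast

lemma smul_m1: "smul (-1) f = - f" by (auto simp: smul_def)
lemma H_uminus[simp]: "f \<in> H \<Longrightarrow> - f \<in> H" by (metis H_smul smul_m1)
lemma H_diff[simp]: "f \<in> H \<Longrightarrow> g \<in> H \<Longrightarrow> f - g \<in> H"
  by (metis H_add H_uminus diff_conv_add_uminus)

lemma ip_zero_left[simp]: "g \<in> H \<Longrightarrow> ip 0 g = 0"
proof -
  assume g: "g \<in> H"
  have "smul 0 g = 0" by (auto simp: smul_def)
  then show ?thesis using ip_smul[OF g g, of 0] by simp
qed
lemma ip_uminus: "f \<in> H \<Longrightarrow> g \<in> H \<Longrightarrow> ip (- f) g = - ip f g"
  using ip_smul[of f g "-1"] by (simp add: smul_m1)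
lemma ip_diff: assumes "f \<in> H" "g \<in> H" "h \<in> H" shows "ip (f - g) h = ip f h - ip g h"
proof -
  have "ip (f - g) h = ip (f + (- g)) h" by (subst diff_conv_add_uminus) (rule refl)
  also have "... = ip f h + ip (- g) h" using assms by (intro ip_add) auto
  finally show ?thesis using assms by (simp add: ip_uminus)
qed
lemma ip_add_r: "f \<in> H \<Longrightarrow> g \<in> H \<Longrightarrow> h \<in> H \<Longrightarrow> ip h (f + g) = ip h f + ip h g"
  by (metis H_add complex_cnj_add ip_add ip_sym)
lemma ip_smul_r: "f \<in> H \<Longrightarrow> g \<in> H \<Longrightarrow> ip g (smul c f) = cnj c * ip g f"
  by (metis H_smul complex_cnj_mult complex_cnj_cnj ip_smul ip_sym)
lemma ip_diff_r: "f \<in> H \<Longrightarrow> g \<in> H \<Longrightarrow> h \<in> H \<Longrightarrow> ip h (f - g) = ip h f - ip h g"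
  by (metis H_diff complex_cnj_diff ip_diff ip_sym)
lemma ip_zero_r[simp]: "g \<in> H \<Longrightarrow> ip g 0 = 0"
  by (metis H_zero complex_cnj_zero ip_sym ip_zero_left)

lemma ip_self_real: "f \<in> H \<Longrightarrow> ip f f = complex_of_real (Re (ip f f))"
  by (metis complex_is_Real_iff ip_sym Reals_cnj_iff of_real_Re)
lemma nm_nonneg[simp]: "f \<in> H \<Longrightarrow> nm f \<ge> 0"
  by (simp add: hnorm_def ip_pos)
lemma nm_sq: "f \<in> H \<Longrightarrow> (nm f)^2 = Re (ip f f)"
  by (simp add: hnorm_def ip_pos)
lemma ip_self_nm: "f \<in> H \<Longrightarrow> ip f f = complex_of_real ((nm f)^2)"
  by (metis ip_self_real nm_sq)
lemma nm_zero_iff: "f \<in> H \<Longrightarrow> nm f = 0 \<longleftrightarrow> f = 0"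
  by (metis H_zero ip_def0 ip_self_nm ip_zero_left of_real_0 power_zero_numeral zero_power2 hnorm_def
      Re_complex_of_real real_sqrt_zero)
lemma nm_zero[simp]: "nm 0 = 0" by (simp add: hnorm_def)

lemma cs_sq: assumes f: "f \<in> H" and g: "g \<in> H"
  shows "(cmod (ip f g))^2 \<le> (nm f)^2 * (nm g)^2"
proof (cases "g = 0")
  case True then show ?thesis using f by simp
next
  case False
  define a where "a = (nm g)^2"
  have a: "a > 0" using False g nm_zero_iff[OF g] nm_nonneg[OF g] unfolding a_def by auto
  define t where "t = ip f g / a"
  have h: "f - smul t g \<in> H" using f g by simp
  have "0 \<le> Re (ip (f - smul t g) (f - smul t g))" using ip_pos[OF h] .
  also have "ip (f - smul t g) (f - smul t g) = ip f f - cnj t * ip f g - t * ip g f + t * cnj t * ip g g"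
    using f g by (simp add: ip_diff ip_diff_r ip_smul ip_smul_r algebra_simps)
  also have "... = ip f f - (cmod (ip f g))^2 / a"
  proof -
    define b where "b = ip f g"
    have e1: "ip g f = cnj b" using ip_sym f g b_def by blast
    have e2: "ip g g = of_real a" unfolding a_def using ip_self_nm[OF g] .
    have e3: "b * cnj b = of_real ((cmod b)^2)" using complex_norm_square[of b] by simp
    have ct: "cnj t = cnj b / of_real a" unfolding t_def b_def by simp
    have "ip f f - cnj t * b - t * cnj b + t * cnj t * of_real a = ip f f - b * cnj b / of_real a"
      unfolding ct using a by (simp add: t_def b_def field_simps)
    then show ?thesis unfolding e1 e2 e3 b_def[symmetric] by simp
  qed
  finally have "(cmod (ip f g))^2 / a \<le> (nm f)^2" using ip_self_nm[OF f] by simp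
  then show ?thesis using a unfolding a_def by (simp add: field_simps mult.commute)
qed

lemma cs: assumes f: "f \<in> H" and g: "g \<in> H" shows "cmod (ip f g) \<le> nm f * nm g"
proof -
  have "(cmod (ip f g))^2 \<le> (nm f * nm g)^2" using cs_sq[OF f g] by (simp add: power_mult_distrib)
  then show ?thesis using f g by (meson mult_nonneg_nonneg nm_nonneg power2_le_imp_le)
qed

lemma nm_triangle: assumes f: "f \<in> H" and g: "g \<in> H" shows "nm (f + g) \<le> nm f + nm g"
proof -
  have "(nm (f+g))^2 = Re (ip f f + ip f g + ip g f + ip g g)"
    using f g by (simp add: nm_sq ip_add ip_add_r algebra_simps)
  also have "... = (nm f)^2 + (nm g)^2 + 2 * Re (ip f g)"
    using f g by (simp add: nm_sq ip_sym[OF f g])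
  also have "... \<le> (nm f)^2 + (nm g)^2 + 2 * (nm f * nm g)"
    using cs[OF f g] complex_Re_le_cmod[of "ip f g"] by linarith
  also have "... = (nm f + nm g)^2" by (simp add: power2_sum)
  finally show ?thesis using f g by (meson add_nonneg_nonneg nm_nonneg power2_le_imp_le)
qed

lemma nm_smul: assumes f: "f \<in> H" shows "nm (smul c f) = cmod c * nm f"
proof -
  have "ip (smul c f) (smul c f) = (c * cnj c) * ip f f"
    using f by (simp add: ip_smul ip_smul_r)
  also have "... = of_real ((cmod c)^2 * (nm f)^2)"
    using f complex_norm_square[of c] by (simp add: ip_self_nm)
  finally have "(nm (smul c f))^2 = (cmod c * nm f)^2"
    using f by (simp add: nm_sq power_mult_distrib)
  moreover have "nm (smul c f) \<ge> 0" using f by simp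
  moreover have "cmod c * nm f \<ge> 0" using f by simp
  ultimately show ?thesis using power2_eq_iff_nonneg by blast
qed

lemma nm_uminus: "f \<in> H \<Longrightarrow> nm (- f) = nm f"
  using nm_smul[of f "-1"] by (simp add: smul_m1)

lemma nm_commute: assumes "f \<in> H" "g \<in> H" shows "nm (f - g) = nm (g - f)"
proof -
  have "f - g = - (g - f)" by simp
  then show ?thesis using nm_uminus[of "g - f"] assms by simp
qed

lemma nm_tri_diff: assumes "f \<in> H" "g \<in> H" "h \<in> H" shows "nm (f - h) \<le> nm (f - g) + nm (g - h)"
proof -
  have "f - h = (f - g) + (g - h)" by simp
  then show ?thesis using nm_triangle[of "f - g" "g - h"] assms by simp
qed

end


context rk begin

lemma expand_min: assumes z: "z \<in> H" and v: "v \<in> H" and a: "(nm v)^2 > 0"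
  shows "Re (ip (z - smul (ip z v / of_real ((nm v)^2)) v) (z - smul (ip z v / of_real ((nm v)^2)) v))
         = (nm z)^2 - (cmod (ip z v))^2 / (nm v)^2"
proof -
  define a where "a = (nm v)^2"
  define t where "t = ip z v / of_real a"
  define b where "b = ip z v"
  have "ip (z - smul t v) (z - smul t v) = ip z z - cnj t * ip z v - t * ip v z + t * cnj t * ip v v"
    using z v by (simp add: ip_diff ip_diff_r ip_smul ip_smul_r algebra_simps)
  also have "... = ip z z - b * cnj b / of_real a"
  proof -
    have e1: "ip v z = cnj b" using ip_sym z v b_def by blast
    have e2: "ip v v = of_real a" unfolding a_def using ip_self_nm[OF v] .
    have ct: "cnj t = cnj b / of_real a" unfolding t_def b_def by simp
    have "ip z z - cnj t * b - t * cnj b + t * cnj t * of_real a = ip z z - b * cnj b / of_real a"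
      unfolding ct using a by (simp add: t_def b_def a_def field_simps)
    then show ?thesis unfolding e1 e2 b_def[symmetric] by simp
  qed
  finally have e: "ip (z - smul t v) (z - smul t v) = ip z z - b * cnj b / of_real a" .
  have e4: "b * cnj b / of_real a = of_real ((cmod b)^2 / a)"
    using complex_norm_square[of b] by simp
  have "Re (ip (z - smul t v) (z - smul t v)) = Re (ip z z - of_real ((cmod b)^2 / a))"
    unfolding e e4 by (rule refl)
  also have "... = Re (ip z z) - (cmod b)^2 / a" by simp
  finally have fin: "Re (ip (z - smul t v) (z - smul t v)) = Re (ip z z) - (cmod b)^2 / a" .
  show ?thesis using fin nm_sq[OF z] unfolding t_def a_def b_def by linarith
qed

definition closedsub :: "cfun set \<Rightarrow> bool" where
  "closedsub V \<longleftrightarrow> V \<subseteq> H \<and> 0 \<in> V \<and> (\<forall>f\<in>V. \<forall>g\<in>V. f + g \<in> V) \<and> (\<forall>c. \<forall>f\<in>V. smul c f \<in> V) \<and>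
     (\<forall>g\<in>H. (\<forall>e>0. \<exists>v\<in>V. nm (g - v) < e) \<longrightarrow> g \<in> V)"

lemma parallelogram: assumes a: "a \<in> H" and b: "b \<in> H"
  shows "(nm (a + b))^2 + (nm (a - b))^2 = 2 * (nm a)^2 + 2 * (nm b)^2"
proof -
  have "ip (a + b) (a + b) + ip (a - b) (a - b) = 2 * ip a a + 2 * ip b b"
    using a b by (simp add: ip_add ip_add_r ip_diff ip_diff_r algebra_simps)
  then have "Re (ip (a + b) (a + b) + ip (a - b) (a - b)) = Re (2 * ip a a + 2 * ip b b)" by simp
  then show ?thesis using a b by (simp add: nm_sq)
qed

lemma proj_exists_min: assumes V: "closedsub V" and x: "x \<in> H"
  shows "\<exists>y\<in>V. \<forall>v\<in>V. nm (x - y) \<le> nm (x - v)"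
proof -
  have VH: "V \<subseteq> H" and V0: "0 \<in> V" and Vadd: "\<And>f g. f \<in> V \<Longrightarrow> g \<in> V \<Longrightarrow> f + g \<in> V"
    and Vsmul: "\<And>c f. f \<in> V \<Longrightarrow> smul c f \<in> V"
    and Vcl: "\<And>g. g \<in> H \<Longrightarrow> (\<And>e. e > 0 \<Longrightarrow> \<exists>v\<in>V. nm (g - v) < e) \<Longrightarrow> g \<in> V"
    using V unfolding closedsub_def by blast+
  define D where "D = (\<lambda>v. nm (x - v)) ` V"
  define \<delta> where "\<delta> = Inf D"
  have Dne: "D \<noteq> {}" using V0 D_def by blast
  have Dbd: "bdd_below D" unfolding D_def using VH x by (intro bdd_belowI[of _ 0]) auto
  have del_le: "\<delta> \<le> nm (x - v)" if "v \<in> V" for v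
    unfolding \<delta>_def D_def using that Dbd D_def by (intro cInf_lower) auto
  have del0: "\<delta> \<ge> 0" using Dne unfolding \<delta>_def D_def using VH x by (intro cInf_greatest) auto
  have "\<exists>v\<in>V. nm (x - v) < \<delta> + 1 / (real n + 1)" for n
  proof -
    have "Inf D < \<delta> + 1 / (real n + 1)" unfolding \<delta>_def by (simp add: add_pos_pos)
    then obtain u where "u \<in> D" "u < \<delta> + 1 / (real n + 1)" using cInf_lessD[OF Dne] by blast
    then show ?thesis unfolding D_def by blast
  qed
  then obtain X where XV: "\<And>n. X n \<in> V" and Xd: "\<And>n. nm (x - X n) < \<delta> + 1 / (real n + 1)"
    by metis
  have XH: "\<And>n. X n \<in> H" using XV VH by blast
  have cauchy_sq: "(nm (X m - X n))^2 \<le> (4 * \<delta> + 2) * (1 / (real n + 1) + 1 / (real m + 1))" for m n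
  proof -
    define a where "a = x - X n"
    define b where "b = x - X m"
    have aH: "a \<in> H" and bH: "b \<in> H" using XH x a_def b_def by auto
    have mid: "smul (1/2) (X n + X m) \<in> V" using XV Vadd Vsmul by blast
    have ab: "a + b = smul 2 (x - smul (1/2) (X n + X m))"
      unfolding a_def b_def by (auto simp: smul_def fun_eq_iff algebra_simps)
    have "nm (a + b) = 2 * nm (x - smul (1/2) (X n + X m))"
      unfolding ab using x mid VH by (subst nm_smul) auto
    then have ge: "nm (a + b) \<ge> 2 * \<delta>" using del_le[OF mid] by simp
    have amb: "a - b = X m - X n" unfolding a_def b_def by simp
    have par: "(nm (a + b))^2 + (nm (X m - X n))^2 = 2 * (nm a)^2 + 2 * (nm b)^2"
      using parallelogram[OF aH bH] amb by simp
    define en where "en = 1 / (real n + 1)"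
    define em where "em = 1 / (real m + 1)"
    have en: "0 < en" "en \<le> 1" unfolding en_def by auto
    have em: "0 < em" "em \<le> 1" unfolding em_def by auto
    have na: "nm a \<le> \<delta> + en" "0 \<le> nm a" using Xd[of n] aH unfolding a_def en_def by auto
    have nb: "nm b \<le> \<delta> + em" "0 \<le> nm b" using Xd[of m] bH unfolding b_def em_def by auto
    have "(nm a)^2 \<le> (\<delta> + en)^2" using na by (intro power_mono) auto
    moreover have "(nm b)^2 \<le> (\<delta> + em)^2" using nb by (intro power_mono) auto
    moreover have "(2 * \<delta>)^2 \<le> (nm (a + b))^2" using ge del0 by (intro power_mono) auto
    ultimately have "(nm (X m - X n))^2 \<le> 2 * (\<delta> + en)^2 + 2 * (\<delta> + em)^2 - (2 * \<delta>)^2"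
      using par by linarith
    also have "... = 4 * \<delta> * (en + em) + 2 * en * en + 2 * em * em" by (simp add: power2_eq_square algebra_simps)
    also have "... \<le> 4 * \<delta> * (en + em) + 2 * en + 2 * em"
      using en em by (intro add_mono) (auto simp: mult_le_cancel_left1 mult_right_le_one_le)
    also have "... = (4 * \<delta> + 2) * (en + em)" by (simp add: algebra_simps)
    finally show ?thesis unfolding en_def em_def by (simp add: add.commute)
  qed
  have "\<exists>N. \<forall>m\<ge>N. \<forall>n\<ge>N. nm (X m - X n) < e" if e: "e > 0" for e
  proof -
    define K where "K = (4 * \<delta> + 2)"
    have K: "K > 0" using del0 K_def by simp
    obtain N :: nat where N: "real N > 2 * K / e^2" using reals_Archimedean2 by blast
    have "nm (X m - X n) < e" if "m \<ge> N" "n \<ge> N" for m n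
    proof -
      have "1 / (real n + 1) \<le> 1 / (real N + 1)" "1 / (real m + 1) \<le> 1 / (real N + 1)"
        using that by (auto simp: divide_simps)
      then have s2: "1 / (real n + 1) + 1 / (real m + 1) \<le> 2 / (real N + 1)" by simp
      have "(nm (X m - X n))^2 \<le> K * (1 / (real n + 1) + 1 / (real m + 1))"
        using cauchy_sq[of m n] unfolding K_def .
      also have "... \<le> K * (2 / (real N + 1))" using s2 K by (intro mult_left_mono) auto
      finally have "(nm (X m - X n))^2 \<le> K * (2 / (real N + 1))" .
      also have "... < e^2"
      proof -
        have p: "e^2 > 0" using e by simp
        have "2 * K < real N * e^2" using N p by (simp add: field_simps)
        moreover have "e^2 * (real N + 1) = real N * e^2 + e^2" by (simp add: algebra_simps)
        ultimately have "2 * K < e^2 * (real N + 1)" using p by linarith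
        then have "2 * K / (real N + 1) < e^2" by (simp add: pos_divide_less_eq)
        then show ?thesis by (simp add: mult.commute)
      qed
      finally show ?thesis using e XH by (meson H_diff nm_nonneg power_less_imp_less_base less_imp_le)
    qed
    then show ?thesis by blast
  qed
  then obtain y where yH: "y \<in> H" and lim: "(\<lambda>n. nm (X n - y)) \<longlonglongrightarrow> 0"
    using H_complete[of X] XH by blast
  have ev: "\<exists>n\<ge>M. nm (X n - y) < e" if "e > 0" for e M
  proof -
    have "eventually (\<lambda>n. nm (X n - y) < e) sequentially"
      using order_tendstoD(2)[OF lim that] .
    then obtain N where "\<forall>n\<ge>N. nm (X n - y) < e" unfolding eventually_sequentially by blast
    then show ?thesis by (metis le_add2 add.commute le_add1 max.cobounded1 max.cobounded2)
  qed
  have yV: "y \<in> V"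
  proof (rule Vcl[OF yH])
    fix e :: real assume "e > 0"
    then obtain n where "nm (X n - y) < e" using ev[of e 0] by blast
    then show "\<exists>v\<in>V. nm (y - v) < e" using XV nm_commute XH yH by metis
  qed
  have "nm (x - y) \<le> \<delta>"
  proof (rule field_le_epsilon)
    fix e :: real assume e: "e > 0"
    obtain M :: nat where M: "1 / (real M + 1) < e / 2"
      using e by (metis add_pos_pos half_gt_zero less_trans real_arch_inverse inverse_eq_divide
          of_nat_Suc zero_less_one add.commute  nat_approx_posE)
    obtain n where n: "n \<ge> M" "nm (X n - y) < e / 2" using ev[of "e/2" M] e by auto
    have "1 / (real n + 1) \<le> 1 / (real M + 1)" using n by (auto simp: divide_simps)
    have "nm (x - y) \<le> nm (x - X n) + nm (X n - y)" using nm_tri_diff x XH yH by blast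
    also have "... < \<delta> + 1 / (real n + 1) + e / 2" using Xd[of n] n by linarith
    finally show "nm (x - y) \<le> \<delta> + e" using M \<open>1 / (real n + 1) \<le> 1 / (real M + 1)\<close> by linarith
  qed
  then show ?thesis using yV del_le by force
qed

lemma proj_exists: assumes V: "closedsub V" and x: "x \<in> H"
  shows "\<exists>y\<in>V. \<forall>v\<in>V. ip (x - y) v = 0"
proof -
  have VH: "V \<subseteq> H" and Vadd: "\<And>f g. f \<in> V \<Longrightarrow> g \<in> V \<Longrightarrow> f + g \<in> V"
    and Vsmul: "\<And>c f. f \<in> V \<Longrightarrow> smul c f \<in> V"
    using V unfolding closedsub_def by blast+
  obtain y where yV: "y \<in> V" and ymin: "\<And>v. v \<in> V \<Longrightarrow> nm (x - y) \<le> nm (x - v)"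
    using proj_exists_min[OF V x] by blast
  have yH: "y \<in> H" using yV VH by blast
  have "ip (x - y) v = 0" if vV: "v \<in> V" for v
  proof (cases "v = 0")
    case True then show ?thesis using x yH by simp
  next
    case False
    have vH: "v \<in> H" using vV VH by blast
    have a: "(nm v)^2 > 0" using False nm_zero_iff[OF vH] nm_nonneg[OF vH] by auto
    define z where "z = x - y"
    have zH: "z \<in> H" using x yH z_def by simp
    define t where "t = ip z v / of_real ((nm v)^2)"
    have w: "y + smul t v \<in> V" using yV vV Vadd Vsmul by blast
    have eq: "x - (y + smul t v) = z - smul t v" unfolding z_def by simp
    have "nm z \<le> nm (z - smul t v)" using ymin[OF w] unfolding eq z_def .
    then have "(nm z)^2 \<le> (nm (z - smul t v))^2" using zH by (intro power_mono) auto
    also have "... = (nm z)^2 - (cmod (ip z v))^2 / (nm v)^2"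
      using expand_min[OF zH vH a] zH vH unfolding t_def by (simp add: nm_sq)
    finally have "(cmod (ip z v))^2 / (nm v)^2 \<le> 0" by simp
    then have "(cmod (ip z v))^2 \<le> 0" using a by (simp add: divide_le_0_iff)
    then show ?thesis unfolding z_def by simp
  qed
  then show ?thesis using yV by blast
qed

lemma riesz:
  assumes Ladd: "\<And>f g. f \<in> H \<Longrightarrow> g \<in> H \<Longrightarrow> L (f + g) = L f + L g"
    and Lsmul: "\<And>c f. f \<in> H \<Longrightarrow> L (smul c f) = c * L f"
    and Lbd: "\<And>f. f \<in> H \<Longrightarrow> cmod (L f) \<le> C * nm f"
  shows "\<exists>k\<in>H. \<forall>f\<in>H. ip f k = L f"
proof (cases "\<forall>f\<in>H. L f = 0")
  case True then show ?thesis by (intro bexI[of _ 0]) auto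
next
  case False
  then obtain u where uH: "u \<in> H" and Lu: "L u \<noteq> 0" by blast
  have L0: "L 0 = 0"
  proof -
    have "smul 0 (0::cfun) = 0" by (simp add: smul_def fun_eq_iff)
    then show ?thesis using Lsmul[of 0 0] by simp
  qed
  have Ldiff: "L (f - g) = L f - L g" if "f \<in> H" "g \<in> H" for f g
  proof -
    have "L (f - g) = L (f + smul (-1) g)" by (simp add: smul_m1)
    also have "... = L f + L (smul (-1) g)" using Ladd that by simp
    also have "... = L f - L g" using Lsmul that by simp
    finally show ?thesis .
  qed
  define C' where "C' = max C 1"
  have Lbd': "cmod (L f) \<le> C' * nm f" if "f \<in> H" for f
    using Lbd[OF that] nm_nonneg[OF that] unfolding C'_def
    by (smt (verit) mult_right_mono max.cobounded1)
  have C'0: "C' > 0" unfolding C'_def by simp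
  define K where "K = {f \<in> H. L f = 0}"
  have K: "closedsub K" unfolding closedsub_def
  proof (intro conjI ballI allI impI)
    show "K \<subseteq> H" unfolding K_def by blast
    show "0 \<in> K" unfolding K_def using L0 by simp
    show "f + g \<in> K" if "f \<in> K" "g \<in> K" for f g using that Ladd unfolding K_def by auto
    show "smul c f \<in> K" if "f \<in> K" for c f using that Lsmul unfolding K_def by auto
    fix g assume gH: "g \<in> H" and ap: "\<forall>e>0. \<exists>v\<in>K. nm (g - v) < e"
    have "cmod (L g) \<le> e" if e: "e > 0" for e
    proof -
      obtain v where vK: "v \<in> K" and nv: "nm (g - v) < e / C'" using ap e C'0 by (meson divide_pos_pos)
      have vH: "v \<in> H" and Lv: "L v = 0" using vK K_def by auto
      have "cmod (L g) = cmod (L (g - v))" using Ldiff[OF gH vH] Lv by simp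
      also have "... \<le> C' * nm (g - v)" using Lbd' gH vH by simp
      also have "... \<le> e" using nv C'0 by (simp add: field_simps)
      finally show ?thesis .
    qed
    then have "L g = 0" by (metis dense_ge less_le_not_le norm_le_zero_iff  zero_less_norm_iff not_less)
    then show "g \<in> K" using gH K_def by simp
  qed
  obtain y where yK: "y \<in> K" and orth: "\<And>v. v \<in> K \<Longrightarrow> ip (u - y) v = 0"
    using proj_exists[OF K uH] by blast
  define w where "w = u - y"
  have yH: "y \<in> H" using yK K_def by simp
  have wH: "w \<in> H" using uH yH w_def by simp
  have Lw: "L w = L u" using Ldiff[OF uH yH] yK K_def w_def by simp
  have w0: "w \<noteq> 0" using Lw Lu L0 by auto
  have a: "(nm w)^2 > 0" using w0 nm_zero_iff[OF wH] nm_nonneg[OF wH] by auto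
  have key: "ip f w = (L f / L w) * of_real ((nm w)^2)" if fH: "f \<in> H" for f
  proof -
    define \<beta> where "\<beta> = L f / L w"
    have "f - smul \<beta> w \<in> K" unfolding K_def using fH wH Ldiff Lsmul Lw Lu \<beta>_def by auto
    then have "ip w (f - smul \<beta> w) = 0" using orth w_def by simp
    then have "ip (f - smul \<beta> w) w = 0" using ip_sym[of "f - smul \<beta> w" w] fH wH by simp
    then have "ip f w = \<beta> * ip w w" using fH wH by (simp add: ip_diff ip_smul)
    then show ?thesis using ip_self_nm[OF wH] \<beta>_def by simp
  qed
  define \<alpha> where "\<alpha> = cnj (L w) / of_real ((nm w)^2)"
  show ?thesis
  proof (intro bexI[of _ "smul \<alpha> w"] ballI)
    fix f assume fH: "f \<in> H"
    have "ip f (smul \<alpha> w) = cnj \<alpha> * ip f w" using fH wH by (simp add: ip_smul_r)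
    also have "... = L f" unfolding key[OF fH] \<alpha>_def using a Lw Lu by (simp add: field_simps)
    finally show "ip f (smul \<alpha> w) = L f" .
  qed (use wH in simp)
qed

end


lemma aux_tri: fixes a b :: complex and s n :: real
  assumes h1: "cmod (a + of_real s * b) \<le> n" and h2: "cmod a \<le> n" and s: "s > 0"
  shows "cmod b \<le> 2 * n / s"
proof -
  have e: "(a + of_real s * b) - a = of_real s * b" by simp
  have "cmod ((a + of_real s * b) - a) \<le> cmod (a + of_real s * b) + cmod a" by (rule norm_triangle_ineq4)
  then have t: "cmod (of_real s * b) \<le> cmod (a + of_real s * b) + cmod a" unfolding e .
  have "cmod (of_real s * b) = s * cmod b" using s by (simp add: norm_mult)
  then have sh: "s * cmod b \<le> 2 * n" using t h1 h2 by linarith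
  then show ?thesis using s by (simp add: pos_le_divide_eq mult.commute)
qed

context rk begin

lemma deriv_add: "f \<in> H \<Longrightarrow> g \<in> H \<Longrightarrow> (deriv ^^ m) (f + g) 0 = (deriv ^^ m) f 0 + (deriv ^^ m) g 0"
  unfolding plus_fun_def using higher_deriv_add[OF H_holo H_holo Om_open Om_0] by blast

lemma deriv_smul: "f \<in> H \<Longrightarrow> (deriv ^^ m) (smul c f) 0 = c * (deriv ^^ m) f 0"
  unfolding smul_def using higher_deriv_cmult[OF H_holo Om_0 Om_open] by blast

definition hd where "hd f g = (if f \<in> H \<and> g \<in> H then nm (f - g) else 0)"

lemma hd_metric: "Metric_space H hd"
proof
  fix x y show "0 \<le> hd x y" unfolding hd_def by auto
  show "hd x y = hd y x" unfolding hd_def using nm_commute by auto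
next
  fix x y assume "x \<in> H" "y \<in> H"
  then show "hd x y = 0 \<longleftrightarrow> x = y" unfolding hd_def using nm_zero_iff[of "x - y"] by auto
next
  fix x y z assume "x \<in> H" "y \<in> H" "z \<in> H"
  then show "hd x z \<le> hd x y + hd y z" unfolding hd_def using nm_tri_diff by auto
qed

sublocale M: Metric_space H hd by (rule hd_metric)

lemma hd_complete: "M.mcomplete"
  unfolding M.mcomplete_def
proof (intro allI impI)
  fix \<sigma> assume "M.MCauchy \<sigma>"
  then have sH: "\<And>n. \<sigma> n \<in> H"
    and cau: "\<And>e. e>0 \<Longrightarrow> \<exists>N. \<forall>n n'. N \<le> n \<longrightarrow> N \<le> n' \<longrightarrow> hd (\<sigma> n) (\<sigma> n') < e"
    unfolding M.MCauchy_def by auto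
  have "\<exists>N. \<forall>m\<ge>N. \<forall>n\<ge>N. nm (\<sigma> m - \<sigma> n) < e" if "e>0" for e
    using cau[OF that] sH by (auto simp: hd_def)
  then obtain g where gH: "g \<in> H" and g: "(\<lambda>n. nm (\<sigma> n - g)) \<longlonglongrightarrow> 0"
    using H_complete[of \<sigma>] sH by blast
  have "limitin M.mtopology \<sigma> g sequentially"
    unfolding M.limitin_metric
  proof (intro conjI allI impI gH)
    fix e :: real assume "e > 0"
    from order_tendstoD(2)[OF g this] show "\<forall>\<^sub>F x in sequentially. \<sigma> x \<in> H \<and> hd (\<sigma> x) g < e"
      by eventually_elim (use sH gH in \<open>auto simp: hd_def\<close>)
  qed
  then show "\<exists>x. limitin M.mtopology \<sigma> x sequentially" by blast
qed

definition Es where "Es r n = {f\<in>H. \<forall>w. cmod w = r \<longrightarrow> cmod (f w) \<le> real (n::nat)}"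

lemma Es_closed: assumes r: "cball 0 r \<subseteq> Om" shows "closedin M.mtopology (Es r n)"
  unfolding M.closedin_metric
proof (intro conjI allI impI)
  show "Es r n \<subseteq> H" unfolding Es_def by (rule subsetI) (erule CollectE, erule conjE)
  fix x assume xx: "x \<in> H - Es r n"
  have xH: "x \<in> H" using xx by (rule DiffD1)
  have xE: "x \<notin> Es r n" using xx by simp
  have nx: "\<not> (\<forall>w. cmod w = r \<longrightarrow> cmod (x w) \<le> real n)"
  proof
    assume "\<forall>w. cmod w = r \<longrightarrow> cmod (x w) \<le> real n"
    then have "x \<in> Es r n" unfolding Es_def using xH by blast
    then show False using xE by blast
  qed
  then obtain w where w1: "cmod w = r" and w2: "\<not> cmod (x w) \<le> real n" by blast
  have w: "cmod w = r" "cmod (x w) > real n" using w1 w2 by auto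
  have "w \<in> cball 0 r" using w by simp
  then have wOm: "w \<in> Om" using r by blast
  obtain C where C: "\<forall>f\<in>H. cmod (f w) \<le> C * nm f" using H_eval[OF wOm] by blast
  define C' where "C' = max C 1"
  have C': "cmod (f w) \<le> C' * nm f" if "f \<in> H" for f
  proof -
    have "C * nm f \<le> C' * nm f" unfolding C'_def using nm_nonneg[OF that]
      by (intro mult_right_mono) auto
    moreover have "cmod (f w) \<le> C * nm f" using C that by blast
    ultimately show ?thesis by linarith
  qed
  have C'0: "C' > 0" unfolding C'_def by simp
  define \<rho> where "\<rho> = (cmod (x w) - real n) / C'"
  have \<rho>: "\<rho> > 0" unfolding \<rho>_def using w C'0 by simp
  have "disjnt (Es r n) (M.mball x \<rho>)"
    unfolding disjnt_iff
  proof (intro allI notI)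
    fix g assume gg: "g \<in> Es r n \<and> g \<in> M.mball x \<rho>"
    then have gE: "g \<in> Es r n" by (rule conjunct1)
    have dxg: "hd x g < \<rho>" using gg by simp
    have gH: "g \<in> H" using gE unfolding Es_def by simp
    have n1: "nm (x - g) < \<rho>" using dxg xH gH by (simp add: hd_def)
    have "cmod (x w - g w) = cmod ((x - g) w)" by simp
    also have "... \<le> C' * nm (x - g)" using C'[of "x - g"] xH gH by simp
    also have "... < C' * \<rho>" using n1 C'0 by simp
    also have "... = cmod (x w) - real n" unfolding \<rho>_def using C'0 by simp
    finally have "cmod (x w - g w) < cmod (x w) - real n" .
    moreover have "cmod (x w) \<le> cmod (g w) + cmod (x w - g w)"
      by (rule norm_triangle_sub)
    moreover have "cmod (g w) \<le> real n" using gE w unfolding Es_def by simp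
    ultimately show False by linarith
  qed
  then show "\<exists>e>0. disjnt (Es r n) (M.mball x e)" using \<rho> by blast
qed

lemma Es_union: assumes r: "cball 0 r \<subseteq> Om" shows "\<Union>(range (Es r)) = H"
proof
  show "\<Union>(range (Es r)) \<subseteq> H" by (auto simp: Es_def)
  show "H \<subseteq> \<Union>(range (Es r))"
  proof
    fix f assume fH: "f \<in> H"
    have "sphere 0 r \<subseteq> Om" using r by auto
    then have "continuous_on (sphere 0 r) f"
      using holomorphic_on_imp_continuous_on[OF H_holo[OF fH]] continuous_on_subset by blast
    then have "compact (f ` sphere 0 r)" by (intro compact_continuous_image) auto
    then have "bounded (f ` sphere 0 r)" by (rule compact_imp_bounded)
    then obtain B where B: "\<forall>y\<in>f ` sphere 0 r. norm y \<le> B"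
      unfolding bounded_iff by blast
    have "f \<in> Es r (nat \<lceil>B\<rceil>)" unfolding Es_def
    proof (intro CollectI conjI allI impI fH)
      fix w :: complex assume "cmod w = r"
      then have "cmod (f w) \<le> B" using B by auto
      also have "B \<le> real (nat \<lceil>B\<rceil>)" by linarith
      finally show "cmod (f w) \<le> real (nat \<lceil>B\<rceil>)" .
    qed
    then show "f \<in> \<Union>(range (Es r))" by blast
  qed
qed

lemma baire_ball: assumes r: "cball 0 r \<subseteq> Om"
  shows "\<exists>n f0 \<rho>. \<rho> > 0 \<and> f0 \<in> H \<and> M.mball f0 \<rho> \<subseteq> Es r n"
proof -
  have "\<exists>n. M.mtopology interior_of (Es r n) \<noteq> {}"
  proof (rule ccontr)
    assume neg: "\<not> ?thesis"
    have i1: "M.mtopology interior_of \<Union>(range (Es r)) = {}"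
    proof (rule M.metric_Baire_category_alt[OF hd_complete, of "range (Es r)"])
      show "countable (range (Es r))" by simp
      fix T assume "T \<in> range (Es r)"
      then obtain k where Tk: "T = Es r k" by blast
      have c1: "closedin M.mtopology (Es r k)" by (rule Es_closed[OF r])
      have c2: "M.mtopology interior_of (Es r k) = {}" using neg by blast
      show "closedin M.mtopology T \<and> M.mtopology interior_of T = {}" unfolding Tk using c1 c2 by (rule conjI)
    qed
    have i2: "M.mtopology interior_of H = H"
      using interior_of_topspace[of M.mtopology] unfolding M.topspace_mtopology .
    have i3: "M.mtopology interior_of H = {}" using i1 unfolding Es_union[OF r] .
    have "H = {}" using trans[OF sym[OF i2] i3] .
    then show False using H_zero by blast
  qed
  then obtain n f0 where f0: "f0 \<in> M.mtopology interior_of (Es r n)" by blast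
  then obtain T where T: "openin M.mtopology T" "f0 \<in> T" "T \<subseteq> Es r n"
    unfolding interior_of_def by blast
  then obtain \<rho> where \<rho>: "\<rho> > 0" "M.mball f0 \<rho> \<subseteq> T" and f0H: "f0 \<in> H"
    unfolding M.openin_mtopology by blast
  then show ?thesis using T by blast
qed

lemma sphere_bound: assumes r: "cball 0 r \<subseteq> Om"
  shows "\<exists>K. \<forall>h\<in>H. \<forall>w. cmod w = r \<longrightarrow> cmod (h w) \<le> K * nm h"
proof -
  obtain n f0 \<rho> where \<rho>: "\<rho> > 0" and f0H: "f0 \<in> H" and ball: "M.mball f0 \<rho> \<subseteq> Es r n"
    using baire_ball[OF r] by blast
  have f0E: "f0 \<in> Es r n" using ball \<rho> f0H by auto
  have bd: "cmod (h w) \<le> (4 * real n / \<rho>) * nm h" if hH: "h \<in> H" and w: "cmod w = r" for h w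
  proof (cases "h = 0")
    case True then show ?thesis by simp
  next
    case False
    have nh: "nm h > 0" using False nm_zero_iff[OF hH] nm_nonneg[OF hH] by auto
    define s where "s = \<rho> / (2 * nm h)"
    have s: "s > 0" unfolding s_def using \<rho> nh by simp
    define g where "g = f0 + smul (of_real s) h"
    have gH: "g \<in> H" unfolding g_def using f0H hH by simp
    have "f0 - g = - smul (of_real s) h" unfolding g_def by simp
    then have "nm (f0 - g) = s * nm h" using nm_uminus nm_smul hH s by simp
    also have "... = \<rho> / 2" unfolding s_def using nh by simp
    finally have "hd f0 g < \<rho>" using \<rho> f0H gH by (simp add: hd_def)
    then have "g \<in> Es r n" using ball f0H gH by auto
    then have "cmod (f0 w + of_real s * h w) \<le> real n" using w unfolding Es_def g_def
      by (simp add: smul_def)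
    moreover have "cmod (f0 w) \<le> real n" using f0E w unfolding Es_def by simp
    ultimately have "cmod (h w) \<le> 2 * real n / s" by (rule aux_tri[OF _ _ s])
    also have "2 * real n / s = (4 * real n / \<rho>) * nm h" unfolding s_def using \<rho> nh by (simp add: field_simps)
    finally show ?thesis .
  qed
  then show ?thesis by blast
qed

lemma deriv_bounded: "\<exists>C. \<forall>f\<in>H. cmod ((deriv ^^ m) f 0) \<le> C * nm f"
proof -
  obtain r where r: "r > 0" "cball 0 r \<subseteq> Om" using Om_open Om_0 open_contains_cball by blast
  obtain K where bd: "\<And>h w. h \<in> H \<Longrightarrow> cmod w = r \<Longrightarrow> cmod (h w) \<le> K * nm h"
    using sphere_bound[OF r(2)] by blast
  have "cmod ((deriv ^^ m) h 0) \<le> (fact m * K / r^m) * nm h" if hH: "h \<in> H" for h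
  proof -
    have "cmod ((deriv ^^ m) h 0) \<le> fact m * (K * nm h) / r^m"
    proof (rule Cauchy_inequality)
      show "h holomorphic_on ball 0 r" using H_holo[OF hH] r(2) ball_subset_cball
        holomorphic_on_subset by blast
      show "continuous_on (cball 0 r) h"
        using holomorphic_on_imp_continuous_on[OF H_holo[OF hH]] r(2) continuous_on_subset by blast
      show "0 < r" using r by simp
      fix x :: complex assume "cmod (0 - x) = r"
      then show "cmod (h x) \<le> K * nm h" using bd[OF hH] by simp
    qed
    then show ?thesis by (simp add: field_simps)
  qed
  then show ?thesis by blast
qed

lemma kernel: "rkernel H ip m 0 \<in> H \<and> (\<forall>f\<in>H. ip f (rkernel H ip m 0) = (deriv ^^ m) f 0)"
proof -
  obtain C where C: "\<forall>f\<in>H. cmod ((deriv ^^ m) f 0) \<le> C * nm f" using deriv_bounded by blast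
  have "\<exists>k\<in>H. \<forall>f\<in>H. ip f k = (deriv ^^ m) f 0"
  proof (rule riesz[where C = C])
    show "(deriv ^^ m) (f + g) 0 = (deriv ^^ m) f 0 + (deriv ^^ m) g 0" if "f \<in> H" "g \<in> H" for f g
      using deriv_add that by blast
    show "(deriv ^^ m) (smul c f) 0 = c * (deriv ^^ m) f 0" if "f \<in> H" for c f
      using deriv_smul that by blast
    show "cmod ((deriv ^^ m) f 0) \<le> C * nm f" if "f \<in> H" for f
      using C that by blast
  qed
  then obtain k where k: "k \<in> H" "\<forall>f\<in>H. ip f k = (deriv ^^ m) f 0" by blast
  have uniq: "k2 = k" if "k2 \<in> H \<and> (\<forall>f\<in>H. ip f k2 = (deriv ^^ m) f 0)" for k2
  proof -
    have "ip (k2 - k) (k2 - k) = 0" using that k by (simp add: ip_diff_r)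
    then show ?thesis using ip_def0[of "k2 - k"] that k by simp
  qed
  show ?thesis unfolding rkernel_def
  proof (rule theI[where a = k])
    show "k \<in> H \<and> (\<forall>f\<in>H. ip f k = (deriv ^^ m) f 0)" using k by blast
    fix k2 assume "k2 \<in> H \<and> (\<forall>f\<in>H. ip f k2 = (deriv ^^ m) f 0)"
    then show "k2 = k" by (rule uniq)
  qed
qed

lemma proj_char: assumes V: "closedsub V" and x: "x \<in> H"
  shows "proj ip V x \<in> V \<and> (\<forall>v\<in>V. ip (x - proj ip V x) v = 0)"
proof -
  have VH: "V \<subseteq> H" and Vadd: "\<And>f g. f \<in> V \<Longrightarrow> g \<in> V \<Longrightarrow> f + g \<in> V"
    and Vsmul: "\<And>c f. f \<in> V \<Longrightarrow> smul c f \<in> V"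
    using V unfolding closedsub_def by blast+
  obtain y where y: "y \<in> V" "\<forall>v\<in>V. ip (x - y) v = 0" using proj_exists[OF V x] by blast
  have uniq: "y2 = y" if y2: "y2 \<in> V \<and> (\<forall>v\<in>V. ip (x - y2) v = 0)" for y2
  proof -
    have dV: "y - y2 \<in> V" using Vadd[of y "smul (-1) y2"] Vsmul[of y2 "-1"] y y2 by (simp add: smul_m1)
    have yH: "y \<in> H" "y2 \<in> H" using y y2 VH by auto
    have "ip (x - y2) (y - y2) - ip (x - y) (y - y2) = 0" using y y2 dV by simp
    moreover have "ip (x - y2) (y - y2) - ip (x - y) (y - y2) = ip ((x - y2) - (x - y)) (y - y2)"
      using x yH by (simp add: ip_diff)
    moreover have "(x - y2) - (x - y) = y - y2" by simp
    ultimately have "ip (y - y2) (y - y2) = 0" by simp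
    then show ?thesis using ip_def0[of "y - y2"] yH by simp
  qed
  show ?thesis unfolding proj_def
  proof (rule theI[where a = y])
    show "y \<in> V \<and> (\<forall>v\<in>V. ip (x - y) v = 0)" using y by blast
    fix y2 assume "y2 \<in> V \<and> (\<forall>v\<in>V. ip (x - y2) v = 0)"
    then show "y2 = y" by (rule uniq)
  qed
qed

end


context rk begin

definition pm :: "complex poly \<Rightarrow> cfun \<Rightarrow> cfun" where "pm p f = (\<lambda>z. poly p z * f z)"

lemma pm_H: assumes f: "f \<in> H" shows "pm p f \<in> H"
proof (induction p)
  case 0
  have "pm 0 f = 0" by (simp add: pm_def fun_eq_iff)
  then show ?case by (simp only: H_zero)
next
  case (pCons a p)
  have "pm (pCons a p) f = smul a f + shift (pm p f)"
    by (simp add: pm_def smul_def shift_def fun_eq_iff algebra_simps)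
  moreover have "smul a f + shift (pm p f) \<in> H" by (intro H_add H_smul H_shift pCons f)
  ultimately show ?case by (simp only:)
qed

abbreviation cyc where "cyc f \<equiv> cyclic H ip f"

lemma cyc_iff: "g \<in> cyc f \<longleftrightarrow> g \<in> H \<and> (\<forall>e>0. \<exists>p. nm (g - pm p f) < e)"
  unfolding cyclic_def pm_def by simp

lemma cyc_closedsub: assumes f: "f \<in> H" shows "closedsub (cyc f)"
  unfolding closedsub_def
proof (intro conjI ballI allI impI)
  show "cyc f \<subseteq> H" using cyc_iff by blast
  have "pm 0 f = 0" by (simp add: pm_def fun_eq_iff)
  then show "0 \<in> cyc f" unfolding cyc_iff by (intro conjI H_zero allI impI exI[of _ 0]) simp
next
  fix g1 g2 assume g1: "g1 \<in> cyc f" and g2: "g2 \<in> cyc f"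
  have g1H: "g1 \<in> H" and g2H: "g2 \<in> H" using g1 g2 unfolding cyc_iff by blast+
  show "g1 + g2 \<in> cyc f" unfolding cyc_iff
  proof (intro conjI allI impI)
    show "g1 + g2 \<in> H" using g1H g2H by simp
    fix e :: real assume e: "e > 0"
    obtain p1 where p1: "nm (g1 - pm p1 f) < e / 2" using g1 e unfolding cyc_iff by (meson half_gt_zero)
    obtain p2 where p2: "nm (g2 - pm p2 f) < e / 2" using g2 e unfolding cyc_iff by (meson half_gt_zero)
    have eq: "g1 + g2 - pm (p1 + p2) f = (g1 - pm p1 f) + (g2 - pm p2 f)"
      by (simp add: pm_def fun_eq_iff algebra_simps)
    have "nm (g1 + g2 - pm (p1 + p2) f) \<le> nm (g1 - pm p1 f) + nm (g2 - pm p2 f)"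
      unfolding eq using g1H g2H pm_H[OF f] by (intro nm_triangle) auto
    also have "... < e" using p1 p2 by linarith
    finally show "\<exists>p. nm (g1 + g2 - pm p f) < e" by blast
  qed
next
  fix c and g assume g: "g \<in> cyc f"
  have gH: "g \<in> H" using g unfolding cyc_iff by blast
  show "smul c g \<in> cyc f" unfolding cyc_iff
  proof (intro conjI allI impI)
    show "smul c g \<in> H" using gH by simp
    fix e :: real assume e: "e > 0"
    have c1: "cmod c + 1 > 0" by (metis norm_ge_zero add_nonneg_pos zero_less_one)
    have e': "e / (cmod c + 1) > 0" using e c1 by (rule divide_pos_pos)
    obtain p where p: "nm (g - pm p f) < e / (cmod c + 1)" using g e' unfolding cyc_iff by blast
    have eq: "smul c g - pm (smult c p) f = smul c (g - pm p f)"
      by (simp add: pm_def smul_def fun_eq_iff algebra_simps)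
    have "nm (smul c g - pm (smult c p) f) = cmod c * nm (g - pm p f)"
      unfolding eq using gH pm_H[OF f] by (intro nm_smul) simp
    also have "... \<le> cmod c * (e / (cmod c + 1))" using p by (intro mult_left_mono) auto
    also have "... < e"
    proof -
      have q: "cmod c / (cmod c + 1) < 1" using c1 by simp
      have "cmod c * (e / (cmod c + 1)) = e * (cmod c / (cmod c + 1))" by simp
      also have "... < e * 1" using q e by (intro mult_strict_left_mono)
      finally show ?thesis by simp
    qed
    finally show "\<exists>p. nm (smul c g - pm p f) < e" by blast
  qed
next
  fix g assume gH: "g \<in> H" and ap: "\<forall>e>0. \<exists>v\<in>cyc f. nm (g - v) < e"
  show "g \<in> cyc f" unfolding cyc_iff
  proof (intro conjI allI impI gH)
    fix e :: real assume e: "e > 0"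
    obtain v where v: "v \<in> cyc f" "nm (g - v) < e / 2" using ap e by (meson half_gt_zero)
    have vH: "v \<in> H" using v unfolding cyc_iff by blast
    obtain p where p: "nm (v - pm p f) < e / 2" using v e unfolding cyc_iff by (meson half_gt_zero)
    have "nm (g - pm p f) \<le> nm (g - v) + nm (v - pm p f)"
      using gH vH pm_H[OF f] by (intro nm_tri_diff)
    also have "... < e" using v p by linarith
    finally show "\<exists>p. nm (g - pm p f) < e" by blast
  qed
qed

lemma f_in_cyc: assumes f: "f \<in> H" shows "f \<in> cyc f"
  unfolding cyc_iff
proof (intro conjI allI impI f)
  fix e :: real assume "e > 0"
  moreover have "pm 1 f = f" by (simp add: pm_def fun_eq_iff)
  ultimately show "\<exists>p. nm (f - pm p f) < e" by (intro exI[of _ 1]) simp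
qed

lemma cyc_shift: assumes f: "f \<in> H" and g: "g \<in> cyc f" shows "shift g \<in> cyc f"
proof -
  obtain C where C: "\<forall>h\<in>H. nm (shift h) \<le> C * nm h" using H_shift_bd by blast
  define C' where "C' = max C 1"
  have C'0: "C' > 0" unfolding C'_def by simp
  have C': "nm (shift h) \<le> C' * nm h" if "h \<in> H" for h
  proof -
    have "C * nm h \<le> C' * nm h" unfolding C'_def using nm_nonneg[OF that]
      by (intro mult_right_mono) auto
    moreover have "nm (shift h) \<le> C * nm h" using C that by blast
    ultimately show ?thesis by linarith
  qed
  have gH: "g \<in> H" using g unfolding cyc_iff by blast
  show ?thesis unfolding cyc_iff
  proof (intro conjI allI impI)
    show "shift g \<in> H" using gH by simp
    fix e :: real assume e: "e > 0"
    have e': "e / C' > 0" using e C'0 by simp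
    obtain p where p: "nm (g - pm p f) < e / C'" using g e' unfolding cyc_iff by blast
    have eq: "shift g - pm (pCons 0 p) f = shift (g - pm p f)"
      by (simp add: pm_def shift_def fun_eq_iff algebra_simps)
    have "nm (shift g - pm (pCons 0 p) f) \<le> C' * nm (g - pm p f)"
      unfolding eq using C'[of "g - pm p f"] gH pm_H[OF f] by simp
    also have "... < C' * (e / C')" using p C'0 by (intro mult_strict_left_mono) auto
    also have "... = e" using C'0 by simp
    finally show "\<exists>p. nm (shift g - pm p f) < e" by blast
  qed
qed

lemma cyc_pow: assumes f: "f \<in> H" and g: "g \<in> cyc f" shows "(\<lambda>z. z ^ k * g z) \<in> cyc f"
proof (induction k)
  case 0 then show ?case using g by simp
next
  case (Suc k)
  have "(\<lambda>z. z ^ Suc k * g z) = shift (\<lambda>z. z ^ k * g z)"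
    by (simp add: shift_def fun_eq_iff algebra_simps)
  then show ?case using cyc_shift[OF f Suc] by simp
qed

lemma cyc_H: "g \<in> cyc f \<Longrightarrow> g \<in> H" unfolding cyc_iff by blast

definition vo :: "nat \<Rightarrow> cfun \<Rightarrow> bool" where "vo d g \<longleftrightarrow> (\<forall>j<d. (deriv ^^ j) g 0 = 0)"

lemma pm_vo: assumes f: "f \<in> H" and v: "vo d f" shows "vo d (pm p f)"
  unfolding vo_def
proof (intro allI impI)
  fix j assume j: "j < d"
  have hp: "(\<lambda>z. poly p z) holomorphic_on Om" by (intro holomorphic_intros)
  have "(deriv ^^ j) (pm p f) 0 =
        (\<Sum>i = 0..j. of_nat (j choose i) * (deriv ^^ i) (\<lambda>z. poly p z) 0 * (deriv ^^ (j - i)) f 0)"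
    unfolding pm_def by (rule higher_deriv_mult[OF hp H_holo[OF f] Om_open Om_0])
  also have "... = 0"
  proof (rule sum.neutral, intro ballI)
    fix i assume "i \<in> {0..j}"
    then have "j - i < d" using j by auto
    then have "(deriv ^^ (j - i)) f 0 = 0" using v unfolding vo_def by blast
    then show "of_nat (j choose i) * (deriv ^^ i) (\<lambda>z. poly p z) 0 * (deriv ^^ (j - i)) f 0 = 0" by simp
  qed
  finally show "(deriv ^^ j) (pm p f) 0 = 0" .
qed

lemma deriv_diff: "f \<in> H \<Longrightarrow> g \<in> H \<Longrightarrow> (deriv ^^ m) (f - g) 0 = (deriv ^^ m) f 0 - (deriv ^^ m) g 0"
proof -
  assume f: "f \<in> H" and g: "g \<in> H"
  have "(deriv ^^ m) (f - g) 0 = (deriv ^^ m) (f + smul (-1) g) 0" by (simp add: smul_m1)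
  also have "... = (deriv ^^ m) f 0 + (deriv ^^ m) (smul (-1) g) 0" using f g by (intro deriv_add) simp_all
  also have "... = (deriv ^^ m) f 0 - (deriv ^^ m) g 0" using deriv_smul[OF g, of m "-1"] by simp
  finally show ?thesis .
qed

lemma cyc_vo: assumes f: "f \<in> H" and v: "vo d f" and g: "g \<in> cyc f" shows "vo d g"
  unfolding vo_def
proof (intro allI impI)
  fix j assume j: "j < d"
  obtain C where C: "\<forall>h\<in>H. cmod ((deriv ^^ j) h 0) \<le> C * nm h" using deriv_bounded by blast
  define C' where "C' = max C 1"
  have C'0: "C' > 0" unfolding C'_def by simp
  have C': "cmod ((deriv ^^ j) h 0) \<le> C' * nm h" if "h \<in> H" for h
  proof -
    have "C * nm h \<le> C' * nm h" unfolding C'_def using nm_nonneg[OF that]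
      by (intro mult_right_mono) auto
    moreover have "cmod ((deriv ^^ j) h 0) \<le> C * nm h" using C that by blast
    ultimately show ?thesis by linarith
  qed
  have gH: "g \<in> H" using g cyc_H by blast
  have "cmod ((deriv ^^ j) g 0) \<le> e" if e: "e > 0" for e
  proof -
    have e': "e / C' > 0" using e C'0 by simp
    obtain p where p: "nm (g - pm p f) < e / C'" using g e' unfolding cyc_iff by blast
    have pH: "pm p f \<in> H" using pm_H[OF f] .
    have z: "(deriv ^^ j) (pm p f) 0 = 0" using pm_vo[OF f v] j unfolding vo_def by blast
    have "cmod ((deriv ^^ j) g 0) = cmod ((deriv ^^ j) (g - pm p f) 0)"
      using deriv_diff[OF gH pH] z by simp
    also have "... \<le> C' * nm (g - pm p f)" using C'[of "g - pm p f"] gH pH by simp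
    also have "... \<le> C' * (e / C')" using p C'0 by (intro mult_left_mono) auto
    also have "... = e" using C'0 by simp
    finally show ?thesis .
  qed
  then have "cmod ((deriv ^^ j) g 0) \<le> 0"
    by (metis field_le_epsilon add.left_neutral)
  then show "(deriv ^^ j) g 0 = 0" by simp
qed

lemma shift_vanish: assumes g: "g \<in> H" and v: "vo d g" and k: "k \<ge> 1"
  shows "(deriv ^^ d) (\<lambda>z. z ^ k * g z) 0 = 0"
proof -
  have hp: "(\<lambda>z. z ^ k) holomorphic_on Om" by (intro holomorphic_intros)
  have "(deriv ^^ d) (\<lambda>z. z ^ k * g z) 0 =
        (\<Sum>i = 0..d. of_nat (d choose i) * (deriv ^^ i) (\<lambda>z. z ^ k) 0 * (deriv ^^ (d - i)) g 0)"
    by (rule higher_deriv_mult[OF hp H_holo[OF g] Om_open Om_0])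
  also have "... = 0"
  proof (rule sum.neutral, intro ballI)
    fix i assume i: "i \<in> {0..d}"
    show "of_nat (d choose i) * (deriv ^^ i) (\<lambda>z. z ^ k) 0 * (deriv ^^ (d - i)) g 0 = 0"
    proof (cases "i = 0")
      case True
      have X: "(deriv ^^ i) (\<lambda>z. z ^ k) 0 = 0" using True k by simp
      show ?thesis unfolding X by simp
    next
      case False
      then have "d - i < d" using i by auto
      then have "(deriv ^^ (d - i)) g 0 = 0" using v unfolding vo_def by blast
      then show ?thesis by simp
    qed
  qed
  finally show ?thesis .
qed

lemma ord_exists: assumes f: "f \<in> H" and f0: "f \<noteq> 0" shows "\<exists>n. (deriv ^^ n) f 0 \<noteq> 0"
proof (rule ccontr)
  assume "\<not> ?thesis"
  then have all: "\<And>n. (deriv ^^ n) f 0 = 0" by blast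
  have "f w = 0" for w
  proof (cases "w \<in> Om")
    case True
    show ?thesis by (rule holomorphic_fun_eq_0_on_connected[OF H_holo[OF f] Om_open Om_conn all Om_0 True])
  next
    case False then show ?thesis using H_out[OF f] by blast
  qed
  then have "f = 0" by (simp add: fun_eq_iff)
  then show False using f0 by blast
qed

lemma ord0_props: assumes f: "f \<in> H" and f0: "f \<noteq> 0"
  shows "(deriv ^^ ord0 f) f 0 \<noteq> 0" and "vo (ord0 f) f"
proof -
  obtain n where n: "(deriv ^^ n) f 0 \<noteq> 0" using ord_exists[OF f f0] by blast
  show "(deriv ^^ ord0 f) f 0 \<noteq> 0" unfolding ord0_def by (rule LeastI[of _ n]) (rule n)
  show "vo (ord0 f) f" unfolding vo_def ord0_def
    using not_less_Least[where P = "\<lambda>n. (deriv ^^ n) f 0 \<noteq> 0"] by blast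
qed

end


context rk begin

lemma pow_H: "q \<in> H \<Longrightarrow> (\<lambda>z. z ^ j * q z) \<in> H"
proof (induction j)
  case 0 then show ?case by simp
next
  case (Suc j)
  have "(\<lambda>z. z ^ Suc j * q z) = shift (\<lambda>z. z ^ j * q z)"
    by (simp add: shift_def fun_eq_iff algebra_simps)
  moreover have "shift (\<lambda>z. z ^ j * q z) \<in> H" using Suc by simp
  ultimately show ?case by (simp only:)
qed

lemma main_rk: assumes f: "f \<in> H" and f0: "f \<noteq> 0"
  shows "(H_inner H ip f \<longleftrightarrow>
           (\<exists>c. c \<noteq> 0 \<and> f = smul c (proj ip (cyclic H ip f) (rkernel H ip (ord0 f) 0))))
         \<and> H_inner H ip (proj ip (cyclic H ip f) (rkernel H ip (ord0 f) 0))"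
proof -
  define d where "d = ord0 f"
  define k where "k = rkernel H ip d 0"
  define g where "g = proj ip (cyc f) k"
  have V: "closedsub (cyc f)" by (rule cyc_closedsub[OF f])
  have Vadd: "\<And>u v. u \<in> cyc f \<Longrightarrow> v \<in> cyc f \<Longrightarrow> u + v \<in> cyc f"
    and Vsmul: "\<And>c u. u \<in> cyc f \<Longrightarrow> smul c u \<in> cyc f"
    using V unfolding closedsub_def by blast+
  have kH: "k \<in> H" and krep: "\<And>h. h \<in> H \<Longrightarrow> ip h k = (deriv ^^ d) h 0"
    using kernel[of d] unfolding k_def by auto
  have gV: "g \<in> cyc f" and orth: "\<And>v. v \<in> cyc f \<Longrightarrow> ip (k - g) v = 0"
    using proj_char[OF V kH] unfolding g_def by auto
  have gH: "g \<in> H" using gV cyc_H by blast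
  have vof: "vo d f" and fd: "(deriv ^^ d) f 0 \<noteq> 0" using ord0_props[OF f f0] unfolding d_def by auto
  have vog: "vo d g" by (rule cyc_vo[OF f vof gV])
  have fV: "f \<in> cyc f" by (rule f_in_cyc[OF f])
  have rep: "ip v g = (deriv ^^ d) v 0" if vV: "v \<in> cyc f" for v
  proof -
    have vH: "v \<in> H" using vV cyc_H by blast
    have "ip (k - g) v = 0" by (rule orth[OF vV])
    then have "ip k v = ip g v" using kH gH vH by (simp add: ip_diff)
    moreover have "ip k v = cnj (ip v k)" using ip_sym[OF vH kH] .
    moreover have "ip g v = cnj (ip v g)" using ip_sym[OF vH gH] .
    ultimately have "ip v g = ip v k" by simp
    then show ?thesis using krep[OF vH] by simp
  qed
  have gvan: "ip g (\<lambda>z. z ^ j * q z) = 0" if qV: "q \<in> cyc f" and qv: "vo d q" and j: "j \<ge> 1" for q j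
  proof -
    have qH: "q \<in> H" using qV cyc_H by blast
    have vV: "(\<lambda>z. z ^ j * q z) \<in> cyc f" by (rule cyc_pow[OF f qV])
    have vH: "(\<lambda>z. z ^ j * q z) \<in> H" by (rule pow_H[OF qH])
    have "ip g (\<lambda>z. z ^ j * q z) = cnj (ip (\<lambda>z. z ^ j * q z) g)" using ip_sym[OF vH gH] .
    also have "ip (\<lambda>z. z ^ j * q z) g = (deriv ^^ d) (\<lambda>z. z ^ j * q z) 0" by (rule rep[OF vV])
    also have "... = 0" by (rule shift_vanish[OF qH qv j])
    finally show ?thesis by simp
  qed
  have gne: "g \<noteq> 0"
  proof
    assume g0: "g = 0"
    have "ip f g = (deriv ^^ d) f 0" by (rule rep[OF fV])
    moreover have "ip f g = 0" using g0 f by simp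
    ultimately show False using fd by simp
  qed
  have ginner: "H_inner H ip g"
    unfolding H_inner_def using gH gne gvan[OF gV vog] by blast
  have equiv: "H_inner H ip f \<longleftrightarrow> (\<exists>c. c \<noteq> 0 \<and> f = smul c g)"
  proof
    assume "\<exists>c. c \<noteq> 0 \<and> f = smul c g"
    then obtain c where c: "c \<noteq> 0" and eq: "f = smul c g" by blast
    show "H_inner H ip f" unfolding H_inner_def
    proof (intro conjI allI impI f f0)
      fix j :: nat assume j: "j \<ge> 1"
      have vH: "(\<lambda>z. z ^ j * g z) \<in> H" by (rule pow_H[OF gH])
      have e2: "(\<lambda>z. z ^ j * f z) = smul c (\<lambda>z. z ^ j * g z)"
        unfolding eq smul_def by (simp add: fun_eq_iff algebra_simps)
      have "ip f (\<lambda>z. z ^ j * f z) = ip (smul c g) (smul c (\<lambda>z. z ^ j * g z))"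
        unfolding e2 by (subst eq) (rule refl)
      also have "... = c * (cnj c * ip g (\<lambda>z. z ^ j * g z))"
        using gH vH by (simp add: ip_smul ip_smul_r)
      also have "ip g (\<lambda>z. z ^ j * g z) = 0" by (rule gvan[OF gV vog j])
      finally show "ip f (\<lambda>z. z ^ j * f z) = 0" by simp
    qed
  next
    assume inner: "H_inner H ip f"
    then have fin: "\<And>j. j \<ge> 1 \<Longrightarrow> ip f (\<lambda>z. z ^ j * f z) = 0" unfolding H_inner_def by blast
    have ff: "ip f f \<noteq> 0" using ip_def0[OF f] f0 by blast
    define \<alpha> where "\<alpha> = ip g f / ip f f"
    define h where "h = g - smul \<alpha> f"
    have hV: "h \<in> cyc f"
    proof -
      have "h = g + smul (- \<alpha>) f" unfolding h_def by (simp add: smul_def fun_eq_iff)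
      moreover have "g + smul (- \<alpha>) f \<in> cyc f" by (intro Vadd Vsmul gV fV)
      ultimately show ?thesis by (simp only:)
    qed
    have hH: "h \<in> H" using hV cyc_H by blast
    have orth_all: "ip h (\<lambda>z. z ^ j * f z) = 0" for j
    proof (cases "j = 0")
      case True
      have e: "(\<lambda>z. z ^ j * f z) = f" using True by simp
      have "ip h f = ip g f - \<alpha> * ip f f" unfolding h_def using gH f by (simp add: ip_diff ip_smul)
      also have "... = 0" unfolding \<alpha>_def using ff by simp
      finally show ?thesis unfolding e .
    next
      case False
      then have j: "j \<ge> 1" by simp
      have vH: "(\<lambda>z. z ^ j * f z) \<in> H" by (rule pow_H[OF f])
      have "ip h (\<lambda>z. z ^ j * f z) = ip g (\<lambda>z. z ^ j * f z) - \<alpha> * ip f (\<lambda>z. z ^ j * f z)"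
        unfolding h_def using gH f vH by (simp add: ip_diff ip_smul)
      also have "ip g (\<lambda>z. z ^ j * f z) = 0" by (rule gvan[OF fV vof j])
      also have "ip f (\<lambda>z. z ^ j * f z) = 0" by (rule fin[OF j])
      finally show ?thesis by simp
    qed
    have polyorth: "\<forall>j. ip h (\<lambda>z. z ^ j * pm p f z) = 0" for p
    proof (induction p)
      case 0
      have "(\<lambda>z. z ^ j * pm 0 f z) = 0" for j by (simp add: pm_def fun_eq_iff)
      then show ?case using hH by simp
    next
      case (pCons a p)
      show ?case
      proof
        fix j
        have A: "(\<lambda>z. z ^ j * f z) \<in> H" by (rule pow_H[OF f])
        have B: "(\<lambda>z. z ^ Suc j * pm p f z) \<in> H" by (rule pow_H[OF pm_H[OF f]])
        have e: "(\<lambda>z. z ^ j * pm (pCons a p) f z) = smul a (\<lambda>z. z ^ j * f z) + (\<lambda>z. z ^ Suc j * pm p f z)"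
          by (simp add: pm_def smul_def fun_eq_iff algebra_simps)
        have "ip h (\<lambda>z. z ^ j * pm (pCons a p) f z) =
              ip h (smul a (\<lambda>z. z ^ j * f z) + (\<lambda>z. z ^ Suc j * pm p f z))"
          by (subst e) (rule refl)
        also have "... = cnj a * ip h (\<lambda>z. z ^ j * f z) + ip h (\<lambda>z. z ^ Suc j * pm p f z)"
          using A B hH by (simp add: ip_add_r ip_smul_r)
        also have "... = 0" unfolding orth_all[of j] pCons.IH[rule_format, of "Suc j"] by simp
        finally show "ip h (\<lambda>z. z ^ j * pm (pCons a p) f z) = 0" .
      qed
    qed
    have pmo: "ip h (pm p f) = 0" for p
    proof -
      have "(\<lambda>z. z ^ 0 * pm p f z) = pm p f" by (simp add: fun_eq_iff)
      then show ?thesis using polyorth[of p] by metis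
    qed
    have h0: "h = 0"
    proof (rule ccontr)
      assume hne: "h \<noteq> 0"
      have nh: "nm h > 0" using hne nm_zero_iff[OF hH] nm_nonneg[OF hH] by auto
      obtain p where p: "nm (h - pm p f) < nm h" using hV nh unfolding cyc_iff by blast
      have pH: "pm p f \<in> H" by (rule pm_H[OF f])
      have "ip h h = ip h (h - pm p f) + ip h (pm p f)" using hH pH by (simp add: ip_diff_r)
      then have "ip h h = ip h (h - pm p f)" using pmo[of p] by simp
      then have "cmod (ip h h) \<le> nm h * nm (h - pm p f)" using cs[of h "h - pm p f"] hH pH by simp
      also have "... < nm h * nm h" using p nh by (intro mult_strict_left_mono)
      finally have lt: "cmod (ip h h) < nm h * nm h" .
      have "cmod (ip h h) = cmod (complex_of_real ((nm h)^2))" using ip_self_nm[OF hH] by (rule arg_cong)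
      also have "... = (nm h)^2" by (simp only: norm_of_real abs_power2)
      finally have "cmod (ip h h) = (nm h)^2" .
      then show False using lt by (simp add: power2_eq_square)
    qed
    have gf: "g = smul \<alpha> f" using h0 unfolding h_def by simp
    have a0: "\<alpha> \<noteq> 0"
    proof
      assume "\<alpha> = 0"
      then have "g = 0" using gf by (simp add: smul_def fun_eq_iff)
      then show False using gne by blast
    qed
    have "f = smul (1 / \<alpha>) g" unfolding gf using a0 by (simp add: smul_def fun_eq_iff)
    then show "\<exists>c. c \<noteq> 0 \<and> f = smul c g" using a0 by (intro exI[of _ "1 / \<alpha>"]) simp
  qed
  show ?thesis using equiv ginner unfolding g_def k_def d_def by blast
qed

end

theorem mainTheorem1:
  assumes "rkhs_setting \<Omega> H ip" and "f \<in> H" and "f \<noteq> 0"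
  shows "(H_inner H ip f \<longleftrightarrow>
           (\<exists>c. c \<noteq> 0 \<and> f = smul c (proj ip (cyclic H ip f) (rkernel H ip (ord0 f) 0))))
         \<and> H_inner H ip (proj ip (cyclic H ip f) (rkernel H ip (ord0 f) 0))"
proof -
  interpret rk \<Omega> H ip by (rule rk.intro) (rule assms(1))
  show ?thesis by (rule main_rk[OF assms(2,3)])
qed


end
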